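(* Let $\mathcal{X}^*=\big((\mathbb{C}^* )^g\times\Delta^*\big)/\mathbb{Z}^g\to\Delta^*$ be a maximally degenerating family of polarized abelian varieties of type $E=\mathrm{diag}(e_1,\dots,e_g)$, written as below, so that for each $t\in\Delta^*$ the fibre is $\mathcal{X}_t=\mathbb{C}^g/\Lambda_t$ with $$\Lambda_t=E\mathbb{Z}^g\oplus\Omega'(t)\mathbb{Z}^g\subset\mathbb{C}^g,\qquad \Omega'(t)=\Big(\tfrac{e_i}{2\pi\sqrt{-1}}\log p_{i,j}(t)\Big)_{i,j}.$$ Suppose a group $H$ acts holomorphically on $\mathcal{X}^*$, preserving each fibre $\mathcal{X}_t$ and the class $c_1(\mathcal{L}_t)$ (the action need not preserve the zero section). Then for every $h\in H$ and $t\in\Delta^*$, the induced map $h_*\colon H_1(\mathcal{X}_t,\mathbb{Z})=\Lambda_t\to\Lambda_t$ preserves the first direct summand $E\mathbb{Z}^g\cong\mathbb{Z}^g$; denoting its restriction there by $l_h\in\mathrm{GL}(g,\mathbb{Z})$, the map $l\colon H\to\mathrm{GL}(g,\mathbb{Z})$, $h\mapsto l_h$, is a group homomorphism.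
   Context: $\Delta$ is the unit disc, $\Delta^*$ the punctured unit disc. Any maximally degenerating family (monodromy of maximal unipotency index) of polarized abelian varieties of dimension $g$ with polarization type $(e_1,\dots,e_g)$, $e_i\mid e_{i+1}$, can be written as $\big((\mathbb{C}^* )^g\times\Delta^*\big)/\mathbb{Z}^g$, where $m\in\mathbb{Z}^g$ acts by $Z_i\mapsto Z_i\prod_j p_{i,j}(t)^{m_j}$ for meromorphic functions $p_{i,j}$ on $\Delta$ with poles only at $0$ and $q_{i,j}:=p_{i,j}^{e_i}$ forming a symmetric matrix. Additive coordinates $z_i$ on $\mathbb{C}^g$ are related to the multiplicative ones by $Z_i=e^{2\pi\sqrt{-1}z_i/e_i}$; this identifies $\mathcal{X}_t=\mathbb{C}^g/\Lambda_t$ with $\Lambda_t$ as in the claim. $\mathcal{L}_t$ denotes the polarization on $\mathcal{X}_t$. *)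

theory Defs
  imports "HOL-Complex_Analysis.Complex_Analysis" "HOL-Algebra.Group"
begin

definition punct_disc :: "complex set" where
  "punct_disc = ball 0 1 - {0}"

definition expm :: "('g::finite \<Rightarrow> nat) \<Rightarrow> complex^'g \<Rightarrow> complex^'g" where
  "expm e z = (\<chi> i. exp (2 * of_real pi * \<i> * z$i / of_nat (e i)))"

definition Emb :: "('g::finite \<Rightarrow> nat) \<Rightarrow> int^'g \<Rightarrow> complex^'g" where
  "Emb e m = (\<chi> i. of_nat (e i) * of_int (m$i))"

definition qmat :: "('g::finite \<Rightarrow> 'g \<Rightarrow> complex \<Rightarrow> complex) \<Rightarrow> ('g \<Rightarrow> nat)
    \<Rightarrow> 'g \<Rightarrow> 'g \<Rightarrow> complex \<Rightarrow> complex" where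
  "qmat p e i j t = p i j t ^ e i"

definition dom_rep :: "((complex^'g::finite) \<times> complex) set" where
  "dom_rep = {(Z, t). (\<forall>i. Z$i \<noteq> 0) \<and> t \<in> punct_disc}"

(* the Z^g-equivalence:  m acts by Z_i |-> Z_i * prod_j p_{ij}(t)^{m_j} *)
definition zrel :: "('g::finite \<Rightarrow> 'g \<Rightarrow> complex \<Rightarrow> complex)
    \<Rightarrow> (complex^'g) \<times> complex \<Rightarrow> (complex^'g) \<times> complex \<Rightarrow> bool" where
  "zrel p x y \<longleftrightarrow> snd y = snd x \<and>
     (\<exists>m::int^'g. \<forall>i. fst y $ i = fst x $ i * (\<Prod>j\<in>UNIV. p i j (snd x) powi (m$j)))"

(* the lattice Lambda_t = E Z^g + Omega'(t) Z^g, i.e. the kernel of C^g -> X_t *)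
definition Lat :: "('g::finite \<Rightarrow> 'g \<Rightarrow> complex \<Rightarrow> complex) \<Rightarrow> ('g \<Rightarrow> nat)
    \<Rightarrow> complex \<Rightarrow> (complex^'g) set" where
  "Lat p e t = {z. \<exists>n::int^'g. \<forall>i.
      exp (2 * of_real pi * \<i> * z$i / of_nat (e i)) = (\<Prod>j\<in>UNIV. p i j t powi (n$j))}"

(* Y(t) = Im Omega'(t) = ( - log |q_{ij}(t)| / (2 pi) )_{ij} *)
definition ImOm :: "('g::finite \<Rightarrow> 'g \<Rightarrow> complex \<Rightarrow> complex) \<Rightarrow> ('g \<Rightarrow> nat)
    \<Rightarrow> complex \<Rightarrow> real^'g^'g" where
  "ImOm p e t = (\<chi> i j. - ln (cmod (qmat p e i j t)) / (2 * pi))"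

(* alternating Riemann form representing c_1(L_t): E(v,w) = Im (v^T Y^{-1} conj w) *)
definition c1form :: "('g::finite \<Rightarrow> 'g \<Rightarrow> complex \<Rightarrow> complex) \<Rightarrow> ('g \<Rightarrow> nat)
    \<Rightarrow> complex \<Rightarrow> complex^'g \<Rightarrow> complex^'g \<Rightarrow> real" where
  "c1form p e t v w = Im (\<Sum>i\<in>UNIV. \<Sum>j\<in>UNIV.
      v$i * of_real (matrix_inv (ImOm p e t) $ i $ j) * cnj (w$j))"

definition holo_on :: "((complex^'g::finite) \<times> complex \<Rightarrow> (complex^'g) \<times> complex)
    \<Rightarrow> ((complex^'g) \<times> complex) set \<Rightarrow> bool" where
  "holo_on G U \<longleftrightarrow> (\<forall>x\<in>U. \<exists>D. (G has_derivative D) (at x) \<and>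
      (\<forall>c v w. D (c *s v, c * w) = (c *s fst (D (v, w)), c * snd (D (v, w)))))"

(* f (a map on representatives) descends to a holomorphic self-map of X^* *)
definition holo_action_map :: "('g::finite \<Rightarrow> 'g \<Rightarrow> complex \<Rightarrow> complex)
    \<Rightarrow> ((complex^'g) \<times> complex \<Rightarrow> (complex^'g) \<times> complex) \<Rightarrow> bool" where
  "holo_action_map p f \<longleftrightarrow>
     (\<forall>x\<in>dom_rep. f x \<in> dom_rep) \<and>
     (\<forall>x\<in>dom_rep. \<forall>y\<in>dom_rep. zrel p x y \<longrightarrow> zrel p (f x) (f y)) \<and>
     (\<forall>x\<in>dom_rep. \<exists>U G. open U \<and> x \<in> U \<and> U \<subseteq> dom_rep \<and> holo_on G U \<and>
         (\<forall>y\<in>U. zrel p (G y) (f y)))"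

(* F : C^g -> C^g is a continuous lift (to the universal cover C^g of X_t) of the
   restriction of f to the fibre X_t; then f_* on H_1(X_t,Z) = Lambda_t is
   lambda |-> F(z + lambda) - F(z) *)
definition is_lift :: "('g::finite \<Rightarrow> 'g \<Rightarrow> complex \<Rightarrow> complex) \<Rightarrow> ('g \<Rightarrow> nat) \<Rightarrow> complex
    \<Rightarrow> ((complex^'g) \<times> complex \<Rightarrow> (complex^'g) \<times> complex) \<Rightarrow> (complex^'g \<Rightarrow> complex^'g) \<Rightarrow> bool" where
  "is_lift p e t f F \<longleftrightarrow> continuous_on UNIV F \<and>
     (\<forall>z. zrel p (expm e (F z), t) (f (expm e z, t)))"

end

theory Submission
  imports Defs
begin


no_notation fps_nth (infixl "$" 75)


definition pw :: "('g::finite \<Rightarrow> 'g \<Rightarrow> complex \<Rightarrow> complex) \<Rightarrow> complex \<Rightarrow> int^'g \<Rightarrow> 'g \<Rightarrow> complex" where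
  "pw p t m i = (\<Prod>j\<in>UNIV. p i j t powi (m$j))"

lemma zrel_pw: "zrel p x y \<longleftrightarrow> snd y = snd x \<and> (\<exists>m. \<forall>i. fst y $ i = fst x $ i * pw p (snd x) m i)"
  by (simp add: zrel_def pw_def)

lemma pw_add: assumes "\<And>i j. p i j t \<noteq> 0"
  shows "pw p t (m + n) i = pw p t m i * pw p t n i"
  unfolding pw_def by (simp add: power_int_add assms prod.distrib)

lemma pw_zero: "pw p t 0 i = 1" by (simp add: pw_def)

lemma pw_nz: assumes "\<And>i j. p i j t \<noteq> 0" shows "pw p t m i \<noteq> 0"
  unfolding pw_def using assms by simp

lemma pw_neg: assumes "\<And>i j. p i j t \<noteq> 0"
  shows "pw p t (- m) i * pw p t m i = 1"
  using pw_add[of p t "-m" m i] assms pw_zero by (metis neg_eq_iff_add_eq_0 add.commute)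



lemma det_cont:
  fixes A :: "'a::topological_space \<Rightarrow> real^'n^'n"
  assumes "\<And>i j. continuous_on S (\<lambda>x. A x $ i $ j)"
  shows "continuous_on S (\<lambda>x. det (A x))"
  unfolding det_def by (intro continuous_intros assms)

locale fam =
  fixes p :: "'g::finite \<Rightarrow> 'g \<Rightarrow> complex \<Rightarrow> complex" and e :: "'g \<Rightarrow> nat"
  assumes e_pos: "\<And>i. e i > 0"
    and p_holo: "\<And>i j. p i j holomorphic_on punct_disc"
    and p_nz: "\<And>i j t. t \<in> punct_disc \<Longrightarrow> p i j t \<noteq> 0"
    and pol: "\<And>t x. t \<in> punct_disc \<Longrightarrow> x \<noteq> 0 \<Longrightarrow> x \<bullet> (ImOm p e t *v x) > 0"
begin

definition ell :: "complex^'g \<Rightarrow> real^'g" where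
  "ell Z = (\<chi> i. - real (e i) * ln (cmod (Z$i)) / (2*pi))"

definition beta :: "complex^'g \<Rightarrow> complex \<Rightarrow> real^'g" where
  "beta Z t = (\<chi> k. det (\<chi> i j. if j = k then ell Z $ i else ImOm p e t $ i $ j) / det (ImOm p e t))"

lemma p_cont: "continuous_on punct_disc (p i j)"
  using p_holo holomorphic_on_imp_continuous_on by blast

lemma open_pd: "open punct_disc" unfolding punct_disc_def by auto

lemma detY: assumes "t \<in> punct_disc" shows "det (ImOm p e t) \<noteq> 0"
proof -
  have "\<forall>x. ImOm p e t *v x = 0 \<longrightarrow> x = 0"
    using pol[OF assms] by (metis inner_zero_right less_irrefl)
  then have "\<exists>B. B ** ImOm p e t = mat 1" using matrix_left_invertible_ker by blast
  then show ?thesis using invertible_det_nz invertible_left_inverse by blast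
qed

lemma beta_iff: assumes "t \<in> punct_disc" shows "ImOm p e t *v x = ell Z \<longleftrightarrow> x = beta Z t"
  unfolding beta_def using cramer[OF detY[OF assms]] by simp

lemma Y_entry: assumes "t \<in> punct_disc"
  shows "ImOm p e t $ i $ j = - real (e i) * ln (cmod (p i j t)) / (2*pi)"
proof -
  have "cmod (p i j t) > 0" using p_nz[OF assms] by simp
  then show ?thesis
    by (simp add: ImOm_def qmat_def norm_power ln_realpow)
qed

lemma ln_pw: assumes "t \<in> punct_disc"
  shows "ln (cmod (pw p t m i)) = (\<Sum>j\<in>UNIV. real_of_int (m$j) * ln (cmod (p i j t)))"
proof -
  have pos: "cmod (p i j t) > 0" for j using p_nz[OF assms] by simp
  have "ln (cmod (pw p t m i)) = ln (\<Prod>j\<in>UNIV. cmod (p i j t) powi (m$j))"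
    by (simp add: pw_def prod_norm[symmetric] norm_power_int)
  also have "\<dots> = (\<Sum>j\<in>UNIV. ln (cmod (p i j t) powi (m$j)))"
    using pos by (intro ln_prod) (auto simp: power_int_def)
  also have "\<dots> = (\<Sum>j\<in>UNIV. real_of_int (m$j) * ln (cmod (p i j t)))"
    using pos by (intro sum.cong refl) (simp add: powr_real_of_int'[symmetric] ln_powr)
  finally show ?thesis .
qed

lemma ell_mult: fixes Z :: "complex^'g" assumes "t \<in> punct_disc" "\<And>i. Z$i \<noteq> 0"
  shows "ell (\<chi> i. Z$i * pw p t m i) = ell Z + ImOm p e t *v (\<chi> j. real_of_int (m$j))"
proof -
  have "cmod (Z$i) > 0" "cmod (pw p t m i) > 0" for i
    using assms pw_nz[of p t] p_nz by auto
  then show ?thesis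
    unfolding ell_def
    by (simp add: vec_eq_iff matrix_vector_mult_def norm_mult ln_mult ln_pw[OF assms(1)] Y_entry[OF assms(1)]
         field_simps sum_divide_distrib sum_distrib_left sum_negf)
qed

end


lemma exp2pi_eq_1: "exp (2 * of_real pi * \<i> * z) = 1 \<longleftrightarrow> z \<in> \<int>"
proof
  assume "exp (2 * of_real pi * \<i> * z) = 1"
  then obtain n :: int where "Re (2 * of_real pi * \<i> * z) = 0" "Im (2 * of_real pi * \<i> * z) = of_int (2*n) * pi"
    unfolding exp_eq_1 by blast
  then have "Im z = 0" "Re z = of_int n" by auto
  then have "z = of_int n" by (simp add: complex_eq_iff)
  then show "z \<in> \<int>" by simp
next
  assume "z \<in> \<int>"
  then obtain n where "z = of_int n" by (auto elim: Ints_cases)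
  then show "exp (2 * of_real pi * \<i> * z) = 1" unfolding exp_eq_1 by auto
qed

lemma int_valued_const_real:
  fixes f :: "'a::topological_space \<Rightarrow> real"
  assumes "connected S" "continuous_on S f" "\<And>x. x \<in> S \<Longrightarrow> f x \<in> \<int>" "x \<in> S" "y \<in> S"
  shows "f x = f y"
proof -
  have "f constant_on S"
  proof (rule continuous_discrete_range_constant[OF assms(1,2)])
    fix x assume "x \<in> S"
    show "\<exists>e>0. \<forall>y. y \<in> S \<and> f y \<noteq> f x \<longrightarrow> e \<le> norm (f y - f x)"
      by (rule exI[of _ 1]) (use assms(3) \<open>x \<in> S\<close> in \<open>auto intro!: Ints_nonzero_abs_ge1\<close>)
  qed
  then show ?thesis using assms(4,5) unfolding constant_on_def by metis
qed

lemma int_valued_const_complex: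
  fixes f :: "'a::topological_space \<Rightarrow> complex"
  assumes "connected S" "continuous_on S f" "\<And>x. x \<in> S \<Longrightarrow> f x \<in> \<int>" "x \<in> S" "y \<in> S"
  shows "f x = f y"
proof -
  have "f constant_on S"
  proof (rule continuous_discrete_range_constant[OF assms(1,2)])
    fix x assume x: "x \<in> S"
    show "\<exists>e>0. \<forall>y. y \<in> S \<and> f y \<noteq> f x \<longrightarrow> e \<le> norm (f y - f x)"
    proof (rule exI[of _ 1], safe)
      fix y assume y: "y \<in> S" "f y \<noteq> f x"
      obtain a where a: "f y - f x = of_int a" using assms(3)[OF x] assms(3)[OF y(1)]
        by (metis Ints_cases Ints_diff)
      then have "a \<noteq> 0" using y by auto
      then show "1 \<le> norm (f y - f x)" using a by simp
    qed simp
  qed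
  then show ?thesis using assms(4,5) unfolding constant_on_def by metis
qed

lemma int_valued_const_vec:
  fixes f :: "'a::topological_space \<Rightarrow> real^'n"
  assumes "connected S" "continuous_on S f" "\<And>x i. x \<in> S \<Longrightarrow> f x $ i \<in> \<int>" "x \<in> S" "y \<in> S"
  shows "f x = f y"
proof -
  have "f x $ i = f y $ i" for i
    by (rule int_valued_const_real[OF assms(1) _ _ assms(4,5)])
      (use assms(2,3) in \<open>auto intro: continuous_on_component\<close>)
  then show ?thesis by (simp add: vec_eq_iff)
qed

context fam begin

abbreviation DR :: "((complex^'g) \<times> complex) set" where "DR \<equiv> dom_rep"

lemma beta_mult: fixes Z :: "complex^'g" assumes "t \<in> punct_disc" "\<And>i. Z$i \<noteq> 0"
  shows "beta (\<chi> i. Z$i * pw p t m i) t = beta Z t + (\<chi> j. real_of_int (m$j))"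
proof -
  have "ImOm p e t *v (beta Z t + (\<chi> j. real_of_int (m$j))) = ell Z + ImOm p e t *v (\<chi> j. real_of_int (m$j))"
    using beta_iff[OF assms(1)] by (simp add: matrix_vector_right_distrib)
  also have "\<dots> = ell (\<chi> i. Z$i * pw p t m i)" using ell_mult[OF assms] by simp
  finally show ?thesis using beta_iff[OF assms(1)] by metis
qed

lemma beta_one: assumes "t \<in> punct_disc" shows "beta (\<chi> i. 1) t = 0"
proof -
  have "ImOm p e t *v 0 = ell (\<chi> i. 1)" by (simp add: ell_def vec_eq_iff)
  then show ?thesis using beta_iff[OF assms] by metis
qed

lemma beta_pw: assumes "t \<in> punct_disc" shows "beta (\<chi> i. pw p t m i) t = (\<chi> j. real_of_int (m$j))"
  using beta_mult[OF assms, of "\<chi> i. 1" m] beta_one[OF assms] by simp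

lemma p_cont_comp: assumes "continuous_on S f" "f ` S \<subseteq> punct_disc"
  shows "continuous_on S (\<lambda>x. p i j (f x))"
  using continuous_on_compose2[OF p_cont assms(1,2)] .

lemma beta_cont: "continuous_on DR (\<lambda>x. beta (fst x) (snd x))"
proof -
  have pd: "snd x \<in> punct_disc" and nz: "fst x $ i \<noteq> 0" if "x \<in> DR" for x :: "(complex^'g) \<times> complex" and i
    using that by (auto simp: dom_rep_def)
  have pnz: "p i j (snd x) \<noteq> 0" if "x \<in> DR" for x :: "(complex^'g) \<times> complex" and i j using p_nz pd that by blast
  have sub: "snd ` DR \<subseteq> punct_disc" using pd by auto
  have c1: "continuous_on DR (\<lambda>x. ImOm p e (snd x) $ i $ j)" for i j
    unfolding ImOm_def qmat_def
    using pd p_nz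
    by (auto intro!: continuous_intros p_cont_comp[OF continuous_on_snd sub] simp: pnz)
  have c2: "continuous_on DR (\<lambda>x. ell (fst x) $ i)" for i
    unfolding ell_def using nz by (auto intro!: continuous_intros)
  have c3: "continuous_on DR (\<lambda>x. det (\<chi> i j. if j = k then ell (fst x) $ i else ImOm p e (snd x) $ i $ j))" for k
  proof (rule det_cont)
    fix i j show "continuous_on DR (\<lambda>x. (\<chi> i j. if j = k then ell (fst x) $ i else ImOm p e (snd x) $ i $ j) $ i $ j)"
      by (cases "j = k") (simp_all add: c1 c2)
  qed
  have c4: "continuous_on DR (\<lambda>x. det (ImOm p e (snd x)))" by (rule det_cont) (simp add: c1)
  show ?thesis unfolding beta_def
    by (intro continuous_on_vec_lambda continuous_on_divide c3 c4) (use detY pd in auto)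
qed

end


lemma expm_nth: "expm e z $ i = exp (2 * of_real pi * \<i> * z$i / of_nat (e i))"
  by (simp add: expm_def)

lemma expm_nz: "expm e z $ i \<noteq> 0" by (simp add: expm_nth)

lemma expm_add: "expm e (z + w) $ i = expm e z $ i * expm e w $ i"
  by (simp add: expm_nth add_divide_distrib distrib_left exp_add)

lemma expm_diff: "expm e (z - w) $ i = expm e z $ i / expm e w $ i"
  by (simp add: expm_nth diff_divide_distrib right_diff_distrib exp_diff)

lemma expm_Emb: assumes "e i > 0" shows "expm e (Emb e m) $ i = 1"
proof -
  have "2 * of_real pi * \<i> * Emb e m $ i / of_nat (e i) = 2 * of_real pi * \<i> * of_int (m$i)"
    using assms by (simp add: Emb_def)
  then show ?thesis by (simp add: expm_nth exp2pi_eq_1 del: exp_eq_1)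
qed

lemma expm_cont: "continuous_on S A \<Longrightarrow> continuous_on S (\<lambda>x. expm e (A x))"
  unfolding expm_def by (auto intro!: continuous_intros simp: divide_inverse)

lemma Emb_inj: assumes "\<And>i. e i > 0" "Emb e m = Emb e n" shows "m = n"
proof -
  have "\<forall>i. e i = 0 \<or> m$i = n$i" using assms(2) by (auto simp: Emb_def vec_eq_iff)
  then show ?thesis using assms(1) by (metis less_irrefl vec_eq_iff)
qed

lemma Emb_add: "Emb e (m + n) = Emb e m + Emb e n"
  by (simp add: Emb_def vec_eq_iff distrib_left)

context fam begin

lemma zrel_refl: "zrel p x x"
  unfolding zrel_pw by (rule conjI, simp, rule exI[of _ 0]) (simp add: pw_zero)

lemma zrel_sym: assumes "snd x \<in> punct_disc" "zrel p x y" shows "zrel p y x"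
proof -
  obtain m where m: "snd y = snd x" "\<And>i. fst y $ i = fst x $ i * pw p (snd x) m i"
    using assms(2) unfolding zrel_pw by blast
  have nz: "\<And>i j. p i j (snd x) \<noteq> 0" using p_nz assms(1) by blast
  have "fst x $ i = fst y $ i * pw p (snd y) (-m) i" for i
    using pw_neg[of p "snd x" m i, OF nz] m by (simp add: algebra_simps)
  then show ?thesis unfolding zrel_pw using m by auto
qed

lemma zrel_trans: assumes "snd x \<in> punct_disc" "zrel p x y" "zrel p y z" shows "zrel p x z"
proof -
  obtain m where m: "snd y = snd x" "\<And>i. fst y $ i = fst x $ i * pw p (snd x) m i"
    using assms(2) unfolding zrel_pw by blast
  obtain n where n: "snd z = snd y" "\<And>i. fst z $ i = fst y $ i * pw p (snd y) n i"
    using assms(3) unfolding zrel_pw by blast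
  have nz: "\<And>i j. p i j (snd x) \<noteq> 0" using p_nz assms(1) by blast
  have "fst z $ i = fst x $ i * pw p (snd x) (m + n) i" for i
    using pw_add[of p "snd x" m n i, OF nz] m n by (simp add: algebra_simps)
  then show ?thesis unfolding zrel_pw using m n by auto
qed

lemma lat_const:
  fixes A :: "'a::topological_space \<Rightarrow> complex^'g"
  assumes t: "t \<in> punct_disc" and S: "connected S" "continuous_on S A"
    and L: "\<And>x. x \<in> S \<Longrightarrow> \<exists>n. \<forall>i. expm e (A x) $ i = pw p t n i"
    and xy: "x \<in> S" "y \<in> S"
  shows "A x = A y"
proof -
  define B where "B x = beta (expm e (A x)) t" for x
  have Bn: "B x = (\<chi> j. real_of_int (n$j))" if "\<forall>i. expm e (A x) $ i = pw p t n i" for x n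
  proof -
    have "expm e (A x) = (\<chi> i. pw p t n i)" using that by (simp add: vec_eq_iff)
    then show ?thesis using beta_pw[OF t] B_def by simp
  qed
  have Bc: "continuous_on S B"
  proof -
    have "continuous_on S (\<lambda>x. (expm e (A x), t))" by (intro continuous_intros expm_cont S)
    moreover have "(\<lambda>x. (expm e (A x), t)) ` S \<subseteq> DR" using t expm_nz by (auto simp: dom_rep_def)
    ultimately show ?thesis using continuous_on_compose2[OF beta_cont] unfolding B_def by fastforce
  qed
  have Bint: "B x $ i \<in> \<int>" if xS: "x \<in> S" for x i
  proof -
    obtain n where "\<forall>i. expm e (A x) $ i = pw p t n i" using L[OF xS] by blast
    then have "B x = (\<chi> j. real_of_int (n$j))" by (rule Bn)
    then show ?thesis by simp
  qed
  have Beq: "B x = B y" if "x \<in> S" "y \<in> S" for x y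
    using int_valued_const_vec[OF S(1) Bc Bint that] .
  have Eeq: "expm e (A w) = expm e (A x)" if wS: "w \<in> S" for w
  proof -
    obtain n where n: "\<forall>i. expm e (A w) $ i = pw p t n i" using L[OF wS] by blast
    obtain n' where n': "\<forall>i. expm e (A x) $ i = pw p t n' i" using L[OF xy(1)] by blast
    have "(\<chi> j. real_of_int (n$j)) = (\<chi> j. real_of_int (n'$j))"
      using Bn[OF n] Bn[OF n'] Beq[OF wS xy(1)] by simp
    then have "n = n'" by (simp add: vec_eq_iff)
    then show ?thesis using n n' by (metis vec_eq_iff)
  qed
  have "A y $ i = A x $ i" for i
  proof -
    define f where "f w = (A w $ i - A x $ i) / of_nat (e i)" for w
    have fc: "continuous_on S f" unfolding f_def using e_pos[of i]
      by (intro continuous_intros S) auto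
    have fi: "f w \<in> \<int>" if "w \<in> S" for w
    proof -
      have "exp (2 * of_real pi * \<i> * f w) = expm e (A w) $ i / expm e (A x) $ i"
        unfolding f_def expm_nth using e_pos[of i]
        by (simp add: exp_diff[symmetric] diff_divide_distrib right_diff_distrib)
      also have "\<dots> = 1" using Eeq[OF that] expm_nz by simp
      finally show ?thesis using exp2pi_eq_1 by blast
    qed
    have "f y = f x" using int_valued_const_complex[OF S(1) fc fi xy(2,1)] .
    then show ?thesis unfolding f_def using e_pos[of i] by simp
  qed
  then show ?thesis by (simp add: vec_eq_iff)
qed

lemma lift_zrel:
  assumes t: "t \<in> punct_disc" and F: "is_lift p e t f F" and G: "is_lift p e t f G"
  shows "\<exists>n. \<forall>i. expm e (G z - F z) $ i = pw p t n i"
proof -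
  have a: "zrel p (expm e (F z), t) (f (expm e z, t))" and b: "zrel p (expm e (G z), t) (f (expm e z, t))"
    using F G unfolding is_lift_def by auto
  have "zrel p (f (expm e z, t)) (expm e (G z), t)"
    by (rule zrel_sym[OF _ b]) (use t in simp)
  then have "zrel p (expm e (F z), t) (expm e (G z), t)"
    using zrel_trans[OF _ a] t by simp
  then obtain n where n: "\<And>i. expm e (G z) $ i = expm e (F z) $ i * pw p t n i"
    unfolding zrel_pw by auto
  show ?thesis by (rule exI[of _ n]) (simp add: expm_diff n expm_nz)
qed

lemma lift_unique:
  assumes t: "t \<in> punct_disc" and F: "is_lift p e t f F" and G: "is_lift p e t f G"
  shows "G z - F z = G w - F w"
proof -
  have Fc: "continuous_on UNIV F" using F unfolding is_lift_def by blast
  have Gc: "continuous_on UNIV G" using G unfolding is_lift_def by blast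
  have c: "continuous_on UNIV (\<lambda>z. G z - F z)" by (rule continuous_on_diff[OF Gc Fc])
  have L: "\<exists>n. \<forall>i. expm e (G x - F x) $ i = pw p t n i" if "x \<in> UNIV" for x using lift_zrel[OF t F G] .
  show ?thesis using lat_const[OF t connected_UNIV c L UNIV_I UNIV_I] by simp
qed

lemma lift_shift_lat:
  assumes t: "t \<in> punct_disc" and F: "is_lift p e t f F"
  shows "\<exists>n. \<forall>i. expm e (F (z + Emb e m) - F z) $ i = pw p t n i"
proof -
  have "is_lift p e t f (\<lambda>z. F (z + Emb e m))"
    unfolding is_lift_def
  proof
    have Fc: "continuous_on UNIV F" using F unfolding is_lift_def by blast
    show "continuous_on UNIV (\<lambda>z. F (z + Emb e m))"
      by (rule continuous_on_compose2[OF Fc]) (auto intro: continuous_intros)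
    have ee: "expm e (z + Emb e m) = expm e z" for z
      by (simp add: vec_eq_iff expm_add expm_Emb e_pos)
    show "\<forall>z. zrel p (expm e (F (z + Emb e m)), t) (f (expm e z, t))"
    proof
      fix z
      have "zrel p (expm e (F (z + Emb e m)), t) (f (expm e (z + Emb e m), t))"
        using F unfolding is_lift_def by blast
      then show "zrel p (expm e (F (z + Emb e m)), t) (f (expm e z, t))" by (simp only: ee)
    qed
  qed
  from lift_zrel[OF t F this] show ?thesis .
qed

lemma lift_shift_const:
  assumes t: "t \<in> punct_disc" and F: "is_lift p e t f F"
  shows "F (z + Emb e m) - F z = F (w + Emb e m) - F w"
proof -
  have Fc: "continuous_on UNIV F" using F unfolding is_lift_def by blast
  have "continuous_on UNIV (\<lambda>z. F (z + Emb e m))"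
    by (rule continuous_on_compose2[OF Fc]) (auto intro: continuous_intros)
  then have c: "continuous_on UNIV (\<lambda>z. F (z + Emb e m) - F z)" using Fc by (rule continuous_on_diff)
  have L: "\<exists>n. \<forall>i. expm e (F (x + Emb e m) - F x) $ i = pw p t n i" if "x \<in> UNIV" for x using lift_shift_lat[OF t F] .
  show ?thesis using lat_const[OF t connected_UNIV c L UNIV_I UNIV_I] by simp
qed

lemma lift_shift_indep:
  assumes t: "t \<in> punct_disc" and F: "is_lift p e t f F" and G: "is_lift p e t f G"
  shows "G (z + Emb e m) - G z = F (w + Emb e m) - F w"
proof -
  have "G (z + Emb e m) - F (z + Emb e m) = G z - F z" using lift_unique[OF t F G] .
  then have "G (z + Emb e m) - G z = F (z + Emb e m) - F z" by (simp add: algebra_simps)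
  also have "\<dots> = F (w + Emb e m) - F w" using lift_shift_const[OF t F] .
  finally show ?thesis .
qed

end


context fam begin

definition Emap :: "(complex^'g) \<times> complex \<Rightarrow> (complex^'g) \<times> complex" where
  "Emap y = (expm e (fst y), snd y)"

lemma Emap_cont: "continuous_on A Emap"
  unfolding Emap_def by (intro continuous_intros expm_cont)

lemma Emap_DR: "snd y \<in> punct_disc \<Longrightarrow> Emap y \<in> DR"
  by (simp add: Emap_def dom_rep_def expm_nz)

lemma pw_cont: "continuous_on A (\<lambda>y. pw p (snd y) m i)" if "snd ` A \<subseteq> punct_disc"
proof -
  have "continuous_on A (\<lambda>y. p i j (snd y) powi (m$j))" for j
    using that p_nz by (intro continuous_intros p_cont_comp[OF continuous_on_snd]) auto
  then show ?thesis unfolding pw_def by (intro continuous_on_prod) auto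
qed

lemma lift_local:
  assumes hf: "holo_action_map p f" and fib: "\<And>x. x \<in> DR \<Longrightarrow> snd (f x) = snd x"
    and y0: "snd y0 \<in> punct_disc"
  obtains N Gt where "open N" "y0 \<in> N" "continuous_on N Gt"
    "\<And>y. y \<in> N \<Longrightarrow> snd y \<in> punct_disc \<and> (\<forall>i. Gt y $ i \<noteq> 0) \<and>
        (\<exists>m. \<forall>i. fst (f (Emap y)) $ i = Gt y $ i * pw p (snd y) m i)"
proof -
  have x0: "Emap y0 \<in> DR" using Emap_DR[OF y0] .
  obtain U G where U: "open U" "Emap y0 \<in> U" "U \<subseteq> DR" "holo_on G U" "\<And>y. y \<in> U \<Longrightarrow> zrel p (G y) (f y)"
    using hf x0 unfolding holo_action_map_def by metis
  have Gc: "continuous_on U G"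
  proof (rule continuous_at_imp_continuous_on, intro ballI)
    fix x assume "x \<in> U"
    then obtain D where "(G has_derivative D) (at x)" using U(4) unfolding holo_on_def by blast
    then show "isCont G x" by (rule has_derivative_continuous)
  qed
  define N where "N = Emap -` U"
  have oN: "open N" unfolding N_def
    by (rule continuous_open_vimage[OF U(1)]) (use Emap_cont[of UNIV] continuous_on_eq_continuous_at in blast)
  have Nsub: "Emap ` N \<subseteq> U" unfolding N_def by auto
  define Gt where "Gt y = fst (G (Emap y))" for y
  have cGt: "continuous_on N Gt" unfolding Gt_def
    by (intro continuous_intros continuous_on_compose2[OF Gc Emap_cont Nsub])
  show ?thesis
  proof (rule that[OF oN _ cGt])
    show "y0 \<in> N" using U(2) N_def by simp
    fix y assume y: "y \<in> N"
    then have u: "Emap y \<in> U" "Emap y \<in> DR" using N_def U(3) by auto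
    then have sy: "snd y \<in> punct_disc" by (simp add: Emap_def dom_rep_def)
    have fu: "f (Emap y) \<in> DR" using hf u(2) unfolding holo_action_map_def by blast
    have sfu: "snd (f (Emap y)) = snd y" using fib[OF u(2)] by (simp add: Emap_def)
    obtain m where m: "snd (f (Emap y)) = snd (G (Emap y))"
        "\<And>i. fst (f (Emap y)) $ i = fst (G (Emap y)) $ i * pw p (snd (G (Emap y))) m i"
      using U(5)[OF u(1)] unfolding zrel_pw by blast
    have m2: "fst (f (Emap y)) $ i = Gt y $ i * pw p (snd y) m i" for i
      using m sfu Gt_def by simp
    have "fst (f (Emap y)) $ i \<noteq> 0" for i using fu by (cases "f (Emap y)") (auto simp: dom_rep_def)
    then have "Gt y $ i \<noteq> 0" for i using m2 by auto
    then show "snd y \<in> punct_disc \<and> (\<forall>i. Gt y $ i \<noteq> 0) \<and>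
        (\<exists>m. \<forall>i. fst (f (Emap y)) $ i = Gt y $ i * pw p (snd y) m i)"
      using sy m2 by blast
  qed
qed

lemma beta_comp_cont:
  assumes "continuous_on N Gt" "\<And>y. y \<in> N \<Longrightarrow> snd y \<in> punct_disc \<and> (\<forall>i. Gt y $ i \<noteq> 0)"
  shows "continuous_on N (\<lambda>y. beta (Gt y) (snd y))"
proof -
  have "continuous_on N (\<lambda>y. (Gt y, snd y))" by (intro continuous_intros assms(1))
  moreover have "(\<lambda>y. (Gt y, snd y)) ` N \<subseteq> DR" using assms(2) by (auto simp: dom_rep_def)
  ultimately show ?thesis using continuous_on_compose2[OF beta_cont] by fastforce
qed

lemma sigma_cont:
  assumes hf: "holo_action_map p f" and fib: "\<And>x. x \<in> DR \<Longrightarrow> snd (f x) = snd x"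
    and y0: "snd y0 \<in> punct_disc"
  shows "isCont (\<lambda>y. exp (2 * of_real pi * \<i> * of_real (beta (fst (f (Emap y))) (snd y) $ k))) y0"
proof -
  obtain N Gt where N: "open N" "y0 \<in> N" "continuous_on N Gt"
    "\<And>y. y \<in> N \<Longrightarrow> snd y \<in> punct_disc \<and> (\<forall>i. Gt y $ i \<noteq> 0) \<and>
        (\<exists>m. \<forall>i. fst (f (Emap y)) $ i = Gt y $ i * pw p (snd y) m i)"
    using lift_local[OF hf fib y0] by blast
  define s' where "s' y = exp (2 * of_real pi * \<i> * of_real (beta (Gt y) (snd y) $ k))" for y
  have eq: "exp (2 * of_real pi * \<i> * of_real (beta (fst (f (Emap y))) (snd y) $ k)) = s' y" if y: "y \<in> N" for y
  proof -
    obtain m where m: "\<And>i. fst (f (Emap y)) $ i = Gt y $ i * pw p (snd y) m i" and sy: "snd y \<in> punct_disc"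
      and nz: "\<And>i. Gt y $ i \<noteq> 0"
      using N(4)[OF y] by blast
    have "fst (f (Emap y)) = (\<chi> i. Gt y $ i * pw p (snd y) m i)" using m by (simp add: vec_eq_iff)
    then have "beta (fst (f (Emap y))) (snd y) = beta (Gt y) (snd y) + (\<chi> j. real_of_int (m$j))"
      using beta_mult[OF sy nz] by simp
    then have "exp (2 * of_real pi * \<i> * of_real (beta (fst (f (Emap y))) (snd y) $ k))
       = exp (2 * of_real pi * \<i> * of_real (beta (Gt y) (snd y) $ k)) * exp (2 * of_real pi * \<i> * of_int (m$k))"
      by (simp add: distrib_left exp_add)
    also have "exp (2 * of_real pi * \<i> * of_int (m$k)) = 1" by (simp add: exp2pi_eq_1 del: exp_eq_1)
    finally show ?thesis by (simp add: s'_def)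
  qed
  have "continuous_on N s'" unfolding s'_def
    by (intro continuous_intros beta_comp_cont[OF N(3)]) (use N(4) in blast)
  then have c0: "isCont s' y0" using continuous_on_eq_continuous_at[OF N(1)] N(2) by blast
  have ev: "eventually (\<lambda>y. exp (2 * of_real pi * \<i> * of_real (beta (fst (f (Emap y))) (snd y) $ k)) = s' y) (nhds y0)"
    by (rule eventually_mono[OF eventually_nhds_in_open[OF N(1,2)]]) (rule eq)
  show ?thesis by (rule iffD2[OF isCont_cong[OF ev] c0])
qed

end


context fam begin

lemma lift_exists_on:
  assumes hf: "holo_action_map p f" and fib: "\<And>x. x \<in> DR \<Longrightarrow> snd (f x) = snd x"
    and B: "B \<subseteq> punct_disc" "convex B"
  shows "\<exists>\<Phi>. continuous_on (UNIV \<times> B) \<Phi> \<and>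
     (\<forall>z. \<forall>t\<in>B. zrel p (expm e (\<Phi> (z, t)), t) (f (expm e z, t)))"
proof -
  define S :: "((complex^'g) \<times> complex) set" where "S = UNIV \<times> B"
  have cvS: "convex S" unfolding S_def by (intro convex_Times convex_UNIV B(2))
  have Ssnd: "snd y \<in> punct_disc" if "y \<in> S" for y using that B(1) S_def by auto
  define W where "W y = fst (f (Emap y))" for y
  define bt where "bt y = beta (W y) (snd y)" for y
  have fE: "f (Emap y) = (W y, snd y)" if "y \<in> S" for y
  proof -
    have "snd (f (Emap y)) = snd y" using fib[OF Emap_DR[OF Ssnd[OF that]]] by (simp add: Emap_def)
    then show ?thesis unfolding W_def by (metis prod.collapse)
  qed
  have Wnz: "W y $ i \<noteq> 0" if "y \<in> S" for y i
  proof -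
    have "f (Emap y) \<in> DR" using hf Emap_DR[OF Ssnd[OF that]] unfolding holo_action_map_def by blast
    then show ?thesis using fE[OF that] by (simp add: dom_rep_def)
  qed
  define sg where "sg k y = exp (2 * of_real pi * \<i> * of_real (bt y $ k))" for k y
  have sgc: "continuous_on S (sg k)" for k
    unfolding sg_def bt_def W_def
    by (rule continuous_at_imp_continuous_on) (use sigma_cont[OF hf fib] Ssnd in blast)
  have "\<forall>k. \<exists>c. continuous_on S c \<and> (\<forall>y\<in>S. sg k y = exp (c y))"
  proof
    fix k
    obtain c where "continuous_on S c" "\<And>y. y \<in> S \<Longrightarrow> sg k y = exp (c y)"
      using continuous_logarithm_on_contractible[OF sgc convex_imp_contractible[OF cvS]]
      by (metis exp_not_eq_zero sg_def)
    then show "\<exists>c. continuous_on S c \<and> (\<forall>y\<in>S. sg k y = exp (c y))" by blast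
  qed
  then obtain c where cc: "\<And>k. continuous_on S (c k)" and ce: "\<And>k y. y \<in> S \<Longrightarrow> sg k y = exp (c k y)"
    by metis
  define bR where "bR y = (\<chi> k. Re (c k y / (2 * of_real pi * \<i>)))" for y
  have bRc: "continuous_on S bR" unfolding bR_def by (intro continuous_intros cc) auto
  have bRint: "bR y $ k - bt y $ k \<in> \<int>" if y: "y \<in> S" for y k
  proof -
    have "exp (2 * of_real pi * \<i> * (c k y / (2 * of_real pi * \<i>) - of_real (bt y $ k))) = exp (c k y) / sg k y"
      unfolding sg_def by (simp add: right_diff_distrib exp_diff)
    also have "\<dots> = 1" using ce[OF y] by simp
    finally have "c k y / (2 * of_real pi * \<i>) - of_real (bt y $ k) \<in> \<int>" using exp2pi_eq_1 by blast
    then obtain n where n: "c k y / (2 * of_real pi * \<i>) - of_real (bt y $ k) = of_int n" by (auto elim: Ints_cases)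
    then have "c k y / (2 * of_real pi * \<i>) = of_real (bt y $ k) + of_int n" by (simp add: algebra_simps)
    then have "bR y $ k = bt y $ k + of_int n" unfolding bR_def by simp
    then show ?thesis by simp
  qed
  define nn where "nn y = (\<chi> k. \<lfloor>bR y $ k - bt y $ k\<rfloor>)" for y
  have nn_eq: "real_of_int (nn y $ k) = bR y $ k - bt y $ k" if yS: "y \<in> S" for y k
  proof -
    obtain n where "bR y $ k - bt y $ k = of_int n" using bRint[OF yS] by (auto elim: Ints_cases)
    then show ?thesis unfolding nn_def by simp
  qed
  define W' where "W' y = (\<chi> i. W y $ i * pw p (snd y) (nn y) i)" for y
  have pnz: "\<And>i j. p i j (snd y) \<noteq> 0" if "y \<in> S" for y using p_nz Ssnd[OF that] by blast
  have W'nz: "W' y $ i \<noteq> 0" if "y \<in> S" for y i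
    unfolding W'_def using Wnz[OF that] pw_nz[of p "snd y", OF pnz[OF that]] by simp
  have bW': "beta (W' y) (snd y) = bR y" if y: "y \<in> S" for y
  proof -
    have "beta (W' y) (snd y) = bt y + (\<chi> j. real_of_int (nn y $ j))"
      unfolding W'_def bt_def using beta_mult[OF Ssnd[OF y] Wnz[OF y]] by simp
    then show ?thesis using nn_eq[OF y] by (simp add: vec_eq_iff)
  qed
  have W'c: "continuous_on S W'"
  proof (rule iffD2[OF continuous_on_eq_continuous_within], intro ballI)
    fix y0 assume y0: "y0 \<in> S"
    obtain N Gt where N: "open N" "y0 \<in> N" "continuous_on N Gt"
      "\<And>y. y \<in> N \<Longrightarrow> snd y \<in> punct_disc \<and> (\<forall>i. Gt y $ i \<noteq> 0) \<and>
          (\<exists>m. \<forall>i. fst (f (Emap y)) $ i = Gt y $ i * pw p (snd y) m i)"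
      using lift_local[OF hf fib Ssnd[OF y0]] by blast
    obtain r where r: "r > 0" "ball y0 r \<subseteq> N" using N(1,2) open_contains_ball by blast
    define C where "C = ball y0 r \<inter> S"
    have Cconn: "connected C" unfolding C_def by (intro convex_connected convex_Int convex_ball cvS)
    have CS: "C \<subseteq> S" and CN: "C \<subseteq> N" using r unfolding C_def by auto
    have y0C: "y0 \<in> C" using y0 r unfolding C_def by auto
    define rho where "rho y = bR y - beta (Gt y) (snd y)" for y
    have rhoc: "continuous_on C rho" unfolding rho_def
    proof (intro continuous_on_diff)
      show "continuous_on C bR" using continuous_on_subset[OF bRc CS] .
      show "continuous_on C (\<lambda>y. beta (Gt y) (snd y))"
        using continuous_on_subset[OF beta_comp_cont[OF N(3)] CN] N(4) by blast
    qed
    have kap: "\<exists>\<kappa>. rho y = (\<chi> j. real_of_int (\<kappa>$j)) \<and> W' y = (\<chi> i. Gt y $ i * pw p (snd y) \<kappa> i)"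
      if y: "y \<in> C" for y
    proof -
      have yS: "y \<in> S" and yN: "y \<in> N" using y CS CN by auto
      obtain m where m: "\<And>i. fst (f (Emap y)) $ i = Gt y $ i * pw p (snd y) m i"
        and Gnz: "\<And>i. Gt y $ i \<noteq> 0" using N(4)[OF yN] by blast
      have W'k: "W' y = (\<chi> i. Gt y $ i * pw p (snd y) (m + nn y) i)"
        unfolding W'_def W_def using m pw_add[of p "snd y", OF pnz[OF yS]] by (simp add: vec_eq_iff algebra_simps)
      have "beta (W' y) (snd y) = beta (Gt y) (snd y) + (\<chi> j. real_of_int ((m + nn y)$j))"
        unfolding W'k using beta_mult[OF Ssnd[OF yS] Gnz] by simp
      then have "rho y = (\<chi> j. real_of_int ((m + nn y)$j))" unfolding rho_def using bW'[OF yS] by simp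
      then show ?thesis using W'k by blast
    qed
    have rhoint: "rho y $ k \<in> \<int>" if "y \<in> C" for y k using kap[OF that] by auto
    have rconst: "rho y = rho y0" if "y \<in> C" for y
      using int_valued_const_vec[OF Cconn rhoc rhoint that y0C] .
    obtain \<kappa>0 where k0: "rho y0 = (\<chi> j. real_of_int (\<kappa>0$j))" using kap[OF y0C] by blast
    define H where "H y = (\<chi> i. Gt y $ i * pw p (snd y) \<kappa>0 i)" for y
    have HW: "W' y = H y" if yC: "y \<in> C" for y
    proof -
      obtain \<kappa> where ka: "rho y = (\<chi> j. real_of_int (\<kappa>$j))" "W' y = (\<chi> i. Gt y $ i * pw p (snd y) \<kappa> i)"
        using kap[OF yC] by blast
      have "\<kappa> = \<kappa>0" using ka(1) k0 rconst[OF yC] by (simp add: vec_eq_iff)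
      then show ?thesis using ka(2) H_def by simp
    qed
    have Hc: "continuous_on N H" unfolding H_def
    proof (intro continuous_on_vec_lambda continuous_on_mult continuous_on_component N(3))
      show "continuous_on N (\<lambda>y. pw p (snd y) \<kappa>0 i)" for i
        by (rule pw_cont) (use N(4) in blast)
    qed
    have "isCont H y0" using continuous_on_eq_continuous_at[OF N(1)] Hc N(2) by blast
    then have "continuous (at y0 within S) H" using continuous_at_imp_continuous_within by blast
    then show "continuous (at y0 within S) W'"
    proof (rule continuous_transform_within[OF _ r(1) y0])
      fix y assume "y \<in> S" "dist y y0 < r"
      then have "y \<in> C" unfolding C_def by (simp add: dist_commute)
      then show "H y = W' y" using HW by simp
    qed
  qed
  have "\<forall>i. \<exists>L. continuous_on S L \<and> (\<forall>y\<in>S. W' y $ i = exp (L y))"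
  proof
    fix i
    obtain L where "continuous_on S L" "\<And>y. y \<in> S \<Longrightarrow> W' y $ i = exp (L y)"
      using continuous_logarithm_on_contractible[OF continuous_on_component[OF W'c] convex_imp_contractible[OF cvS]]
        W'nz by metis
    then show "\<exists>L. continuous_on S L \<and> (\<forall>y\<in>S. W' y $ i = exp (L y))" by blast
  qed
  then obtain L where Lc: "\<And>i. continuous_on S (L i)" and Le: "\<And>i y. y \<in> S \<Longrightarrow> W' y $ i = exp (L i y)"
    by metis
  define Phi where "Phi y = (\<chi> i. of_nat (e i) * L i y / (2 * of_real pi * \<i>))" for y
  have Phic: "continuous_on S Phi" unfolding Phi_def by (intro continuous_intros Lc) auto
  have ePhi: "expm e (Phi y) $ i = W' y $ i" if "y \<in> S" for y i
  proof -
    have "2 * of_real pi * \<i> * Phi y $ i / of_nat (e i) = L i y"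
      unfolding Phi_def using e_pos[of i] by simp
    then show ?thesis using Le[OF that] by (simp add: expm_nth)
  qed
  have "zrel p (expm e (Phi (z, t)), t) (f (expm e z, t))" if t: "t \<in> B" for z t
  proof -
    have y: "(z, t) \<in> S" using t S_def by simp
    have fe: "f (expm e z, t) = (W (z, t), t)" using fE[OF y] by (simp add: Emap_def)
    have "W (z, t) $ i = expm e (Phi (z, t)) $ i * pw p t (- nn (z, t)) i" for i
    proof -
      have "expm e (Phi (z, t)) $ i * pw p t (- nn (z, t)) i
          = W (z, t) $ i * (pw p t (- nn (z, t)) i * pw p t (nn (z, t)) i)"
        using ePhi[OF y] unfolding W'_def by (simp add: algebra_simps)
      also have "\<dots> = W (z, t) $ i" using pw_neg[of p "snd (z,t)", OF pnz[OF y]] by simp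
      finally show ?thesis by simp
    qed
    then show ?thesis unfolding zrel_pw fe by auto
  qed
  then show ?thesis using Phic S_def by blast
qed

lemma lift_exists:
  assumes hf: "holo_action_map p f" and fib: "\<And>x. x \<in> DR \<Longrightarrow> snd (f x) = snd x"
    and t: "t \<in> punct_disc"
  shows "\<exists>F. is_lift p e t f F"
proof -
  obtain Phi where Phi: "continuous_on (UNIV \<times> {t}) Phi"
     "\<And>z. zrel p (expm e (Phi (z, t)), t) (f (expm e z, t))"
    using lift_exists_on[OF hf fib, of "{t}"] t by auto
  have "continuous_on UNIV (\<lambda>z. Phi (z, t))"
    by (rule continuous_on_compose2[OF Phi(1)]) (auto intro: continuous_intros)
  then show ?thesis unfolding is_lift_def using Phi(2) by blast
qed

end


lemma powi_no_log:
  fixes h :: "complex \<Rightarrow> complex" and k :: int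
  assumes r: "r > 0" and hc: "continuous_on (sphere 0 r) h"
    and he: "\<And>w. w \<in> sphere 0 r \<Longrightarrow> w powi k = exp (h w)"
  shows "k = 0"
proof -
  define \<gamma> where "\<gamma> s = of_real r * exp (\<i> * of_real s)" for s :: real
  have \<gamma>S: "\<gamma> s \<in> sphere 0 r" for s using r by (simp add: \<gamma>_def norm_mult)
  define \<phi> where "\<phi> s = h (\<gamma> s) - \<i> * of_int k * of_real s" for s :: real
  have \<gamma>c: "continuous_on {0..2*pi} \<gamma>" unfolding \<gamma>_def by (intro continuous_intros)
  have \<phi>c: "continuous_on {0..2*pi} \<phi>" unfolding \<phi>_def
    by (intro continuous_intros continuous_on_compose2[OF hc \<gamma>c]) (use \<gamma>S in auto)
  have e\<phi>: "exp (\<phi> s) = of_real r powi k" for s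
  proof -
    have "exp (h (\<gamma> s)) = \<gamma> s powi k" using he[OF \<gamma>S] by simp
    also have "\<dots> = of_real r powi k * exp (of_int k * (\<i> * of_real s))"
      unfolding \<gamma>_def by (simp add: power_int_mult_distrib exp_power_int)
    finally show ?thesis unfolding \<phi>_def by (simp add: exp_diff mult_ac)
  qed
  have rnz: "(of_real r :: complex) powi k \<noteq> 0" using r by simp
  define \<psi> where "\<psi> s = (\<phi> s - \<phi> 0) / (2 * of_real pi * \<i>)" for s
  have \<psi>c: "continuous_on {0..2*pi} \<psi>" unfolding \<psi>_def by (intro continuous_intros \<phi>c) auto
  have \<psi>i: "\<psi> s \<in> \<int>" for s
  proof -
    have "exp (2 * of_real pi * \<i> * \<psi> s) = exp (\<phi> s) / exp (\<phi> 0)" unfolding \<psi>_def by (simp add: exp_diff)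
    also have "\<dots> = 1" using e\<phi> rnz by simp
    finally show ?thesis using exp2pi_eq_1 by blast
  qed
  have "\<psi> (2*pi) = \<psi> 0"
    by (rule int_valued_const_complex[OF connected_Icc \<psi>c]) (use \<psi>i pi_gt_zero in auto)
  moreover have "\<psi> 0 = 0" unfolding \<psi>_def by simp
  moreover have "\<gamma> (2*pi) = \<gamma> 0" unfolding \<gamma>_def by (simp add: exp_eq_1)
  then have "\<psi> (2*pi) = - of_int k" unfolding \<psi>_def \<phi>_def by (simp add: field_simps)
  ultimately show ?thesis by simp
qed

lemma prod_powi: fixes w :: complex assumes "w \<noteq> 0"
  shows "(\<Prod>j\<in>A. w powi c j) = w powi (\<Sum>j\<in>A. c j)"
proof (induction A rule: infinite_finite_induct)
  case (insert x F) then show ?case using assms by (simp add: power_int_add)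
qed auto

locale fam2 = fam p e for p :: "'g::finite \<Rightarrow> 'g \<Rightarrow> complex \<Rightarrow> complex" and e +
  assumes p_merom: "\<And>i j. not_essential (p i j) 0"
    and max_degen: "det (\<chi> i j. of_int (zorder (p i j) 0) :: real^'g^'g) \<noteq> 0"
begin

lemma p_factor: "\<exists>g r. r > 0 \<and> g holomorphic_on cball 0 r \<and> (\<forall>w\<in>cball 0 r. g w \<noteq> 0) \<and>
   (\<forall>w\<in>cball 0 r - {0}. p i j w = g w * w powi zorder (p i j) 0)"
proof -
  have iso: "isolated_singularity_at (p i j) 0"
    unfolding isolated_singularity_at_def
    by (rule exI[of _ 1]) (use p_holo analytic_on_open open_pd in \<open>auto simp: punct_disc_def\<close>)
  have ev: "eventually (\<lambda>w. p i j w \<noteq> 0) (at 0)"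
    unfolding eventually_at by (rule exI[of _ 1]) (auto intro!: p_nz simp: punct_disc_def)
  have fr: "\<exists>\<^sub>F w in at 0. p i j w \<noteq> 0"
    by (rule eventually_frequently[OF _ ev]) (simp add: trivial_limit_at)
  from zorder_exist[OF iso p_merom fr] show ?thesis by auto
qed

lemma no_monodromy:
  fixes V :: "complex \<Rightarrow> complex^'g"
  assumes Vc: "continuous_on punct_disc V"
    and Ve: "\<And>t i. t \<in> punct_disc \<Longrightarrow> exp (2 * of_real pi * \<i> * V t $ i / of_nat (e i)) = pw p t n0 i"
  shows "n0 = 0"
proof -
  have "\<forall>i j. \<exists>g r. r > 0 \<and> g holomorphic_on cball 0 r \<and> (\<forall>w\<in>cball 0 r. g w \<noteq> 0) \<and>
   (\<forall>w\<in>cball 0 r - {0}. p i j w = g w * w powi zorder (p i j) 0)" using p_factor by blast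
  then obtain G R where GR: "\<And>i j. R i j > 0" "\<And>i j. G i j holomorphic_on cball 0 (R i j)"
     "\<And>i j w. w \<in> cball 0 (R i j) \<Longrightarrow> G i j w \<noteq> 0"
     "\<And>i j w. w \<in> cball 0 (R i j) - {0} \<Longrightarrow> p i j w = G i j w * w powi zorder (p i j) 0"
    by metis
  define r0 where "r0 = Min (insert (1/2) (range (\<lambda>ij. R (fst ij) (snd ij))))"
  have fin: "finite (insert (1/2) (range (\<lambda>ij. R (fst ij) (snd ij))))" by simp
  have r0pos: "r0 > 0" unfolding r0_def using GR(1) by (subst Min_gr_iff[OF fin]) auto
  have r0R: "r0 \<le> R i j" for i j unfolding r0_def by (rule Min_le[OF fin]) (auto intro: range_eqI[of _ _ "(i,j)"])
  have r0h: "r0 \<le> 1/2" unfolding r0_def by (rule Min_le[OF fin]) auto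
  define N :: "'g \<Rightarrow> 'g \<Rightarrow> int" where "N i j = zorder (p i j) 0" for i j
  have ksum: "(\<Sum>j\<in>UNIV. N i j * n0 $ j) = 0" for i
  proof -
    define U where "U w = (\<Prod>j\<in>UNIV. G i j w powi (n0 $ j))" for w
    have cb: "cball 0 r0 \<subseteq> cball 0 (R i j)" for j using r0R[of i j] by auto
    have Gc: "continuous_on (cball 0 r0) (G i j)" for j
      using continuous_on_subset[OF holomorphic_on_imp_continuous_on[OF GR(2)] cb] .
    have Uc: "continuous_on (cball 0 r0) U" unfolding U_def
    proof (intro continuous_on_prod)
      fix j show "continuous_on (cball 0 r0) (\<lambda>w. G i j w powi (n0$j))"
        by (rule continuous_on_power_int[OF Gc]) (use GR(3) cb in blast)
    qed
    have Unz: "U w \<noteq> 0" if wc: "w \<in> cball 0 r0" for w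
    proof -
      have "G i j w \<noteq> 0" for j using GR(3) cb wc by blast
      then show ?thesis unfolding U_def by simp
    qed
    obtain Lg where Lg: "continuous_on (cball 0 r0) Lg" "\<And>w. w \<in> cball 0 r0 \<Longrightarrow> U w = exp (Lg w)"
      using continuous_logarithm_on_cball[OF Uc Unz] by metis
    have sph_pd: "sphere 0 r0 \<subseteq> punct_disc" using r0pos r0h by (auto simp: punct_disc_def)
    have sph_cb: "sphere 0 r0 \<subseteq> cball 0 r0" by auto
    define h where "h w = 2 * of_real pi * \<i> * V w $ i / of_nat (e i) - Lg w" for w
    have hc: "continuous_on (sphere 0 r0) h" unfolding h_def
      by (intro continuous_intros continuous_on_subset[OF Vc sph_pd] continuous_on_subset[OF Lg(1) sph_cb]) (use e_pos in auto)
    have "w powi (\<Sum>j\<in>UNIV. N i j * n0 $ j) = exp (h w)" if w: "w \<in> sphere 0 r0" for w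
    proof -
      have w0: "w \<noteq> 0" using w r0pos by auto
      have wR: "w \<in> cball 0 (R i j) - {0}" for j using w w0 r0R[of i j] by auto
      have "pw p w n0 i = (\<Prod>j\<in>UNIV. (G i j w * w powi N i j) powi (n0$j))"
        unfolding pw_def N_def using GR(4)[OF wR] by simp
      also have "\<dots> = U w * (\<Prod>j\<in>UNIV. w powi (N i j * n0$j))"
        unfolding U_def by (simp add: power_int_mult_distrib power_int_mult prod.distrib)
      also have "\<dots> = U w * w powi (\<Sum>j\<in>UNIV. N i j * n0$j)" by (simp only: prod_powi[OF w0])
      finally have "exp (2 * of_real pi * \<i> * V w $ i / of_nat (e i)) = exp (Lg w) * w powi (\<Sum>j\<in>UNIV. N i j * n0$j)"
        using Ve[of w i] sph_pd w Lg(2)[of w] sph_cb by auto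
      then show ?thesis unfolding h_def by (simp add: exp_diff)
    qed
    from powi_no_log[OF r0pos hc this] show ?thesis .
  qed
  define M :: "real^'g^'g" where "M = (\<chi> i j. of_int (zorder (p i j) 0))"
  define x :: "real^'g" where "x = (\<chi> j. real_of_int (n0$j))"
  have "M *v x = 0"
  proof -
    have "(M *v x) $ i = real_of_int (\<Sum>j\<in>UNIV. N i j * n0 $ j)" for i
      by (simp add: M_def x_def N_def matrix_vector_mult_def)
    then show ?thesis using ksum by (simp add: vec_eq_iff)
  qed
  moreover obtain B where "B ** M = mat 1"
    using max_degen unfolding M_def by (metis invertible_det_nz invertible_def)
  ultimately have "x = 0" by (metis matrix_vector_mul_assoc matrix_vector_mul_lid matrix_vector_mult_0_right)
  then show ?thesis by (simp add: x_def vec_eq_iff)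
qed

end


lemma additive_linear:
  fixes A :: "int^'n::finite \<Rightarrow> int^'n"
  assumes add: "\<And>x y. A (x + y) = A x + A y"
  shows "A m = (\<chi> i j. A (axis j 1) $ i) *v m"
proof -
  have A0: "A 0 = 0" using add[of 0 0] by simp
  have Aneg: "A (- x) = - A x" for x
  proof -
    have "A x + A (- x) = 0" using add[of x "-x"] A0 by simp
    then show ?thesis by (metis neg_eq_iff_add_eq_0)
  qed
  have Anat: "A (of_nat n *s x) = of_nat n *s A x" for n x
  proof (induction n)
    case 0 then show ?case using A0 by (simp add: vec_eq_iff)
  next
    case (Suc n)
    have "of_nat (Suc n) *s x = of_nat n *s x + x" by (simp add: vec_eq_iff algebra_simps)
    then show ?case using Suc add by (simp add: vec_eq_iff algebra_simps)
  qed
  have Aint: "A (k *s x) = k *s A x" for k x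
  proof (cases "k \<ge> 0")
    case True then show ?thesis using Anat[of "nat k" x] by simp
  next
    case False
    have e1: "k *s x = - ((-k) *s x)" by (simp add: vec_eq_iff)
    have e2: "A ((-k) *s x) = (-k) *s A x" using Anat[of "nat (-k)" x] False by simp
    have "A (k *s x) = - ((-k) *s A x)" unfolding e1 Aneg e2 ..
    then show ?thesis by (simp add: vec_eq_iff)
  qed
  have Asum: "A (\<Sum>j\<in>J. f j) = (\<Sum>j\<in>J. A (f j))" if "finite J" for J f
    using that by (induction J rule: finite_induct) (simp_all add: A0 add)
  have mexp: "m = (\<Sum>j\<in>UNIV. (m$j) *s axis j 1)"
    by (simp add: vec_eq_iff axis_def if_distrib cong: if_cong)
  have "A m = A (\<Sum>j\<in>UNIV. (m$j) *s axis j 1)" by (rule arg_cong[OF mexp])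
  also have "\<dots> = (\<Sum>j\<in>UNIV. A ((m$j) *s axis j 1))" by (rule Asum) simp
  also have "\<dots> = (\<Sum>j\<in>UNIV. (m$j) *s A (axis j 1))" by (simp only: Aint)
  also have "\<dots> = (\<chi> i j. A (axis j 1) $ i) *v m"
    by (auto simp: vec_eq_iff matrix_vector_mult_def intro!: sum.cong)
  finally show ?thesis .
qed

lemma mat_eq_mv:
  fixes L L' :: "int^'n::finite^'m::finite"
  assumes "\<And>m. L *v m = L' *v m" shows "L = L'"
proof -
  have ax: "(M *v axis j 1) $ i = M $ i $ j" for M :: "int^'n^'m" and i j
    by (simp add: matrix_vector_mult_def axis_def if_distrib cong: if_cong)
  have "L $ i $ j = L' $ i $ j" for i j
  proof -
    have "L $ i $ j = (L *v axis j 1) $ i" by (simp only: ax)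
    also have "\<dots> = (L' *v axis j 1) $ i" by (simp only: assms)
    also have "\<dots> = L' $ i $ j" by (simp only: ax)
    finally show ?thesis .
  qed
  then show ?thesis by (simp add: vec_eq_iff)
qed

context fam2 begin

lemma connected_pd: "connected punct_disc"
proof -
  have "aff_dim (ball (0::complex) 1) = 2" by (subst aff_dim_open) auto
  then show ?thesis unfolding punct_disc_def
    by (intro connected_punctured_convex convex_ball) simp
qed

lemma half_pd: "(1/2 :: complex) \<in> punct_disc" by (simp add: punct_disc_def)

lemma per_f:
  assumes hf: "holo_action_map p f" and fib: "\<And>x. x \<in> DR \<Longrightarrow> snd (f x) = snd x"
  shows "\<exists>L. \<forall>t\<in>punct_disc. \<forall>F. is_lift p e t f F \<longrightarrow> (\<forall>m z. F (z + Emb e m) - F z = Emb e (L *v m))"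
proof -
  define Vf where "Vf m t = (SOME F. is_lift p e t f F) (Emb e m) - (SOME F. is_lift p e t f F) 0" for m t
  have V1: "F (z + Emb e m) - F z = Vf m t" if t: "t \<in> punct_disc" and F: "is_lift p e t f F" for t F z m
  proof -
    have S: "is_lift p e t f (SOME F. is_lift p e t f F)" by (rule someI_ex[OF lift_exists[OF hf fib t]])
    have "F (z + Emb e m) - F z = (SOME F. is_lift p e t f F) (0 + Emb e m) - (SOME F. is_lift p e t f F) 0"
      by (rule lift_shift_indep[OF t S F])
    then show ?thesis unfolding Vf_def by simp
  qed
  have V2: "continuous_on punct_disc (Vf m)" for m
  proof (rule continuous_at_imp_continuous_on, intro ballI)
    fix t0 assume t0: "t0 \<in> punct_disc"
    obtain r where r: "r > 0" "ball t0 r \<subseteq> punct_disc" using open_pd t0 open_contains_ball by blast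
    obtain Phi where Phi: "continuous_on (UNIV \<times> ball t0 r) Phi"
      "\<And>z t. t \<in> ball t0 r \<Longrightarrow> zrel p (expm e (Phi (z, t)), t) (f (expm e z, t))"
      using lift_exists_on[OF hf fib r(2) convex_ball] by blast
    have lt: "is_lift p e t f (\<lambda>z. Phi (z, t))" if t: "t \<in> ball t0 r" for t
    proof -
      have "continuous_on UNIV (\<lambda>z. Phi (z, t))"
        by (rule continuous_on_compose2[OF Phi(1)]) (use t in \<open>auto intro: continuous_intros\<close>)
      then show ?thesis unfolding is_lift_def using Phi(2)[OF t] by blast
    qed
    have eq: "Vf m t = Phi (Emb e m, t) - Phi (0, t)" if t: "t \<in> ball t0 r" for t
      using V1[OF subsetD[OF r(2) t] lt[OF t], of 0 m] by simp
    have c1: "continuous_on (ball t0 r) (\<lambda>t. Phi (w, t))" for w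
      by (rule continuous_on_compose2[OF Phi(1)]) (auto intro: continuous_intros)
    have "continuous_on (ball t0 r) (\<lambda>t. Phi (Emb e m, t) - Phi (0, t))"
      by (rule continuous_on_diff[OF c1 c1])
    then have c: "isCont (\<lambda>t. Phi (Emb e m, t) - Phi (0, t)) t0"
      using continuous_on_eq_continuous_at[OF open_ball] r(1) centre_in_ball by blast
    have ev: "eventually (\<lambda>t. Vf m t = Phi (Emb e m, t) - Phi (0, t)) (nhds t0)"
      by (rule eventually_mono[OF eventually_nhds_in_open[OF open_ball]]) (use r(1) eq in auto)
    show "isCont (Vf m) t0" by (rule iffD2[OF isCont_cong[OF ev] c])
  qed
  have V3: "\<exists>n. \<forall>i. expm e (Vf m t) $ i = pw p t n i" if t: "t \<in> punct_disc" for m t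
  proof -
    obtain F where F: "is_lift p e t f F" using lift_exists[OF hf fib t] by blast
    show ?thesis using lift_shift_lat[OF t F, of 0 m] V1[OF t F, of 0 m] by simp
  qed
  have V4: "\<exists>n0. \<forall>t\<in>punct_disc. \<forall>i. expm e (Vf m t) $ i = pw p t n0 i" for m
  proof -
    define B where "B t = beta (expm e (Vf m t)) t" for t
    have Bn: "B t = (\<chi> j. real_of_int (n$j))" if "t \<in> punct_disc" "\<forall>i. expm e (Vf m t) $ i = pw p t n i" for t n
    proof -
      have "expm e (Vf m t) = (\<chi> i. pw p t n i)" using that(2) by (simp add: vec_eq_iff)
      then show ?thesis using beta_pw[OF that(1)] B_def by simp
    qed
    have Bc: "continuous_on punct_disc B"
    proof -
      have "continuous_on punct_disc (\<lambda>t. (expm e (Vf m t), t))" by (intro continuous_intros expm_cont V2)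
      moreover have "(\<lambda>t. (expm e (Vf m t), t)) ` punct_disc \<subseteq> DR" using expm_nz by (auto simp: dom_rep_def)
      ultimately show ?thesis using continuous_on_compose2[OF beta_cont] unfolding B_def by fastforce
    qed
    have Bint: "B t $ i \<in> \<int>" if tt: "t \<in> punct_disc" for t i
    proof -
      obtain n where nn: "\<forall>i. expm e (Vf m t) $ i = pw p t n i" using V3[OF tt] by blast
      have "B t = (\<chi> j. real_of_int (n$j))" using Bn[OF tt nn] .
      then show ?thesis by simp
    qed
    obtain n0 where n0: "\<forall>i. expm e (Vf m (1/2)) $ i = pw p (1/2) n0 i" using V3[OF half_pd] by blast
    have "\<forall>i. expm e (Vf m t) $ i = pw p t n0 i" if tt: "t \<in> punct_disc" for t
    proof -
      obtain n where n: "\<forall>i. expm e (Vf m t) $ i = pw p t n i" using V3[OF tt] by blast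
      have "B t = B (1/2)" using int_valued_const_vec[OF connected_pd Bc Bint tt half_pd] .
      then have "n = n0" using Bn[OF tt n] Bn[OF half_pd n0] by (simp add: vec_eq_iff)
      then show ?thesis using n by simp
    qed
    then show ?thesis by blast
  qed
  have V5: "\<forall>t\<in>punct_disc. \<forall>i. expm e (Vf m t) $ i = 1" for m
  proof -
    obtain n0 where n0: "\<forall>t\<in>punct_disc. \<forall>i. expm e (Vf m t) $ i = pw p t n0 i" using V4 by blast
    have "n0 = 0" by (rule no_monodromy[OF V2[of m]]) (use n0 in \<open>simp add: expm_nth\<close>)
    then show ?thesis using n0 by (simp add: pw_zero)
  qed
  define Am where "Am m = (\<chi> i. \<lfloor>Re (Vf m (1/2) $ i / of_nat (e i))\<rfloor>)" for m
  have V6: "Vf m t = Emb e (Am m)" if tt: "t \<in> punct_disc" for m t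
  proof -
    have "Vf m t $ i = Vf m (1/2) $ i" for i
    proof -
      define g where "g s = Vf m s $ i / of_nat (e i)" for s
      have gc: "continuous_on punct_disc g" unfolding g_def
        by (intro continuous_intros V2) (use e_pos[of i] in auto)
      have gi: "g s \<in> \<int>" if "s \<in> punct_disc" for s
        using V5[of m] that exp2pi_eq_1[of "g s"] unfolding g_def by (simp add: expm_nth)
      have "g t = g (1/2)" using int_valued_const_complex[OF connected_pd gc gi tt half_pd] .
      then show ?thesis unfolding g_def using e_pos[of i] by simp
    qed
    moreover have "Vf m (1/2) $ i = of_nat (e i) * of_int (Am m $ i)" for i
    proof -
      have "Vf m (1/2) $ i / of_nat (e i) \<in> \<int>"
        using V5[of m] half_pd exp2pi_eq_1[of "Vf m (1/2) $ i / of_nat (e i)"] by (simp add: expm_nth)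
      then obtain k where k: "Vf m (1/2) $ i / of_nat (e i) = of_int k" by (auto elim: Ints_cases)
      have "Am m $ i = \<lfloor>Re (Vf m (1/2) $ i / of_nat (e i))\<rfloor>" by (simp only: Am_def vec_lambda_beta)
      also have "\<dots> = \<lfloor>Re (complex_of_int k)\<rfloor>" by (simp only: k)
      also have "\<dots> = k" by simp
      finally have "Am m $ i = k" .
      then show ?thesis using k e_pos[of i] by (simp add: field_simps)
    qed
    ultimately show ?thesis by (simp add: vec_eq_iff Emb_def)
  qed
  have Aadd: "Am (x + y) = Am x + Am y" for x y
  proof -
    obtain F where F: "is_lift p e (1/2) f F" using lift_exists[OF hf fib half_pd] by blast
    have "Emb e (Am (x + y)) = F (0 + Emb e (x + y)) - F 0" using V1[OF half_pd F, of 0 "x+y"] V6[OF half_pd, of "x+y"] by simp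
    also have "\<dots> = (F ((0 + Emb e x) + Emb e y) - F (0 + Emb e x)) + (F (0 + Emb e x) - F 0)"
      by (simp add: Emb_add add.assoc)
    also have "\<dots> = Emb e (Am y) + Emb e (Am x)"
      using V1[OF half_pd F, of "0 + Emb e x" y] V1[OF half_pd F, of 0 x] V6[OF half_pd, of x] V6[OF half_pd, of y] by simp
    finally have "Emb e (Am (x + y)) = Emb e (Am x + Am y)" by (simp add: Emb_add add.commute)
    then show ?thesis by (rule Emb_inj[OF e_pos])
  qed
  show ?thesis
  proof (rule exI[of _ "\<chi> i j. Am (axis j 1) $ i"], intro ballI allI impI)
    fix t F m z assume t: "t \<in> punct_disc" and F: "is_lift p e t f F"
    have "F (z + Emb e m) - F z = Vf m t" by (rule V1[OF t F])
    also have "\<dots> = Emb e (Am m)" by (rule V6[OF t])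
    also have "\<dots> = Emb e ((\<chi> i j. Am (axis j 1) $ i) *v m)"
      by (rule arg_cong[of _ _ "Emb e", OF additive_linear[OF Aadd]])
    finally show "F (z + Emb e m) - F z = Emb e ((\<chi> i j. Am (axis j 1) $ i) *v m)" .
  qed
qed

end


theorem lemma2p7:
  fixes p :: "'g::{linorder,finite} \<Rightarrow> 'g \<Rightarrow> complex \<Rightarrow> complex"
    and e :: "'g \<Rightarrow> nat"
    and H :: "('h, 'b) monoid_scheme"
    and act :: "'h \<Rightarrow> (complex, 'g) vec \<times> complex \<Rightarrow> (complex, 'g) vec \<times> complex"
  assumes e_pos: "\<And>i. e i > 0"
    and e_dvd: "\<And>i j. i \<le> j \<Longrightarrow> e i dvd e j"
    and p_holo: "\<And>i j. p i j holomorphic_on punct_disc"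
    and p_nonzero: "\<And>i j t. t \<in> punct_disc \<Longrightarrow> p i j t \<noteq> 0"
    and p_merom: "\<And>i j. not_essential (p i j) 0"
    and q_sym: "\<And>i j t. t \<in> punct_disc \<Longrightarrow> qmat p e i j t = qmat p e j i t"
    and polarized: "\<And>t x. t \<in> punct_disc \<Longrightarrow> x \<noteq> 0 \<Longrightarrow> x \<bullet> (ImOm p e t *v x) > 0"
    and max_degen: "det (\<chi> i j. of_int (zorder (p i j) 0) :: ((real, 'g) vec, 'g) vec) \<noteq> 0"
    and grp: "group H"
    and act_holo: "\<And>h. h \<in> carrier H \<Longrightarrow> holo_action_map p (act h)"
    and act_fibre: "\<And>h x. h \<in> carrier H \<Longrightarrow> x \<in> dom_rep \<Longrightarrow> snd (act h x) = snd x"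
    and act_one: "\<And>x. x \<in> dom_rep \<Longrightarrow> zrel p (act \<one>\<^bsub>H\<^esub> x) x"
    and act_mult: "\<And>h h' x. h \<in> carrier H \<Longrightarrow> h' \<in> carrier H \<Longrightarrow> x \<in> dom_rep \<Longrightarrow>
        zrel p (act (h \<otimes>\<^bsub>H\<^esub> h') x) (act h (act h' x))"
    and act_c1: "\<And>h t F z v w. h \<in> carrier H \<Longrightarrow> t \<in> punct_disc \<Longrightarrow> is_lift p e t (act h) F \<Longrightarrow>
        v \<in> Lat p e t \<Longrightarrow> w \<in> Lat p e t \<Longrightarrow>
        c1form p e t (F (z + v) - F z) (F (z + w) - F z) = c1form p e t v w"
  shows "\<exists>l :: 'h \<Rightarrow> ((int, 'g) vec, 'g) vec.
           (\<forall>h\<in>carrier H. invertible (l h)) \<and>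
           (\<forall>h\<in>carrier H. \<forall>h'\<in>carrier H. l (h \<otimes>\<^bsub>H\<^esub> h') = l h ** l h') \<and>
           (\<forall>h\<in>carrier H. \<forall>t\<in>punct_disc. \<forall>F. is_lift p e t (act h) F \<longrightarrow>
              (\<forall>m z. F (z + Emb e m) - F z = Emb e (l h *v m)))"
proof -
  interpret fam2 p e
    by unfold_locales (use e_pos p_holo p_nonzero polarized p_merom max_degen in auto)
  have half: "(1/2::complex) \<in> punct_disc" by (rule half_pd)
  define P where "P h L \<longleftrightarrow> (\<forall>t\<in>punct_disc. \<forall>F. is_lift p e t (act h) F \<longrightarrow>
      (\<forall>m z. F (z + Emb e m) - F z = Emb e (L *v m)))" for h L
  have exP: "\<exists>L. P h L" if "h \<in> carrier H" for h
    unfolding P_def by (rule per_f[OF act_holo[OF that] act_fibre[OF that]])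
  define l where "l h = (SOME L. P h L)" for h
  have Pl: "P h (l h)" if "h \<in> carrier H" for h
    unfolding l_def by (rule someI_ex[OF exP[OF that]])
  have Pl': "F (z + Emb e m) - F z = Emb e (l h *v m)"
    if "h \<in> carrier H" "is_lift p e (1/2) (act h) F" for h F z m
    using Pl[OF that(1)] that(2) half unfolding P_def by blast
  have lifts: "\<exists>F. is_lift p e (1/2) (act h) F" if "h \<in> carrier H" for h
    by (rule lift_exists[OF act_holo[OF that] act_fibre[OF that] half])
  have mc: "h \<otimes>\<^bsub>H\<^esub> h' \<in> carrier H" if "h \<in> carrier H" "h' \<in> carrier H" for h h'
    using that grp by (simp add: group.is_monoid monoid.m_closed)
  have one: "\<one>\<^bsub>H\<^esub> \<in> carrier H" using grp by (simp add: group.is_monoid monoid.one_closed)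
  have hom: "l (h \<otimes>\<^bsub>H\<^esub> h') = l h ** l h'" if h: "h \<in> carrier H" and h': "h' \<in> carrier H" for h h'
  proof -
    obtain F where F: "is_lift p e (1/2) (act h) F" using lifts[OF h] by blast
    obtain F' where F': "is_lift p e (1/2) (act h') F'" using lifts[OF h'] by blast
    let ?t = "1/2::complex"
    have comp: "is_lift p e ?t (act (h \<otimes>\<^bsub>H\<^esub> h')) (\<lambda>z. F (F' z))"
      unfolding is_lift_def
    proof
      have Fc: "continuous_on UNIV F" and F'c: "continuous_on UNIV F'" using F F' unfolding is_lift_def by auto
      show "continuous_on UNIV (\<lambda>z. F (F' z))" by (rule continuous_on_compose2[OF Fc F'c]) simp
      show "\<forall>z. zrel p (expm e (F (F' z)), ?t) (act (h \<otimes>\<^bsub>H\<^esub> h') (expm e z, ?t))"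
      proof
        fix z
        define x0 where "x0 = (expm e z, ?t)"
        define x1 where "x1 = (expm e (F' z), ?t)"
        have x0D: "x0 \<in> dom_rep" and x1D: "x1 \<in> dom_rep" unfolding x0_def x1_def using half expm_nz
          by (auto simp: dom_rep_def)
        have y1D: "act h' x0 \<in> dom_rep" using act_holo[OF h'] x0D unfolding holo_action_map_def by blast
        have a: "zrel p (expm e (F (F' z)), ?t) (act h x1)" using F unfolding is_lift_def x1_def by blast
        have b: "zrel p x1 (act h' x0)" using F' unfolding is_lift_def x1_def x0_def by blast
        have c: "zrel p (act h x1) (act h (act h' x0))"
          using act_holo[OF h] x1D y1D b unfolding holo_action_map_def by blast
        have d: "zrel p (act (h \<otimes>\<^bsub>H\<^esub> h') x0) (act h (act h' x0))" by (rule act_mult[OF h h' x0D])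
        have "snd (act (h \<otimes>\<^bsub>H\<^esub> h') x0) = snd x0" by (rule act_fibre[OF mc[OF h h'] x0D])
        also have "snd x0 = 1/2" by (simp add: x0_def)
        finally have sd: "snd (act (h \<otimes>\<^bsub>H\<^esub> h') x0) \<in> punct_disc" using half by (simp only:)
        have d': "zrel p (act h (act h' x0)) (act (h \<otimes>\<^bsub>H\<^esub> h') x0)" by (rule zrel_sym[OF sd d])
        have e1: "zrel p (expm e (F (F' z)), ?t) (act h (act h' x0))"
          by (rule zrel_trans[OF _ a c]) (simp add: half)
        have "zrel p (expm e (F (F' z)), ?t) (act (h \<otimes>\<^bsub>H\<^esub> h') x0)"
          by (rule zrel_trans[OF _ e1 d']) (simp add: half)
        then show "zrel p (expm e (F (F' z)), ?t) (act (h \<otimes>\<^bsub>H\<^esub> h') (expm e z, ?t))" by (simp add: x0_def)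
      qed
    qed
    have "l (h \<otimes>\<^bsub>H\<^esub> h') *v m = (l h ** l h') *v m" for m
    proof -
      have "Emb e (l (h \<otimes>\<^bsub>H\<^esub> h') *v m) = F (F' (0 + Emb e m)) - F (F' 0)"
        using Pl'[OF mc[OF h h'] comp, of 0 m] by simp
      also have "F' (0 + Emb e m) = F' 0 + Emb e (l h' *v m)"
        using Pl'[OF h' F', of 0 m] by (simp add: algebra_simps)
      also have "F (F' 0 + Emb e (l h' *v m)) - F (F' 0) = Emb e (l h *v (l h' *v m))"
        by (rule Pl'[OF h F])
      finally have E2: "Emb e (l (h \<otimes>\<^bsub>H\<^esub> h') *v m) = Emb e ((l h ** l h') *v m)"
        by (simp add: matrix_vector_mul_assoc)
      show ?thesis by (rule Emb_inj[of e]) (use e_pos E2 in auto)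
    qed
    then show ?thesis by (rule mat_eq_mv)
  qed
  have lone: "l \<one>\<^bsub>H\<^esub> = mat 1"
  proof -
    have idl: "is_lift p e (1/2) (act \<one>\<^bsub>H\<^esub>) (\<lambda>z. z)"
      unfolding is_lift_def
    proof (intro conjI allI continuous_on_id)
      fix z
      have xD: "(expm e z, 1/2::complex) \<in> dom_rep" using half expm_nz by (auto simp: dom_rep_def)
      have s: "snd (act \<one>\<^bsub>H\<^esub> (expm e z, 1/2::complex)) \<in> punct_disc"
        unfolding act_fibre[OF one xD] snd_conv by (rule half)
      show "zrel p (expm e z, 1/2) (act \<one>\<^bsub>H\<^esub> (expm e z, 1/2))"
        by (rule zrel_sym[OF s act_one[OF xD]])
    qed
    have "l \<one>\<^bsub>H\<^esub> *v m = mat 1 *v m" for m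
    proof -
      have E: "Emb e (l \<one>\<^bsub>H\<^esub> *v m) = Emb e m" using Pl'[OF one idl, of 0 m] by simp
      have "l \<one>\<^bsub>H\<^esub> *v m = m" by (rule Emb_inj[of e]) (use e_pos E in auto)
      then show ?thesis by simp
    qed
    then show ?thesis by (rule mat_eq_mv)
  qed
  show ?thesis
  proof (intro exI[of _ l] conjI ballI)
    fix h assume h: "h \<in> carrier H"
    have hi: "inv\<^bsub>H\<^esub> h \<in> carrier H" using grp h by (simp add: group.inv_closed)
    have "l h ** l (inv\<^bsub>H\<^esub> h) = mat 1" using hom[OF h hi] lone grp h by (simp add: group.r_inv)
    moreover have "l (inv\<^bsub>H\<^esub> h) ** l h = mat 1" using hom[OF hi h] lone grp h by (simp add: group.l_inv)
    ultimately show "invertible (l h)" unfolding invertible_def by blast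
  next
    fix h h' assume "h \<in> carrier H" "h' \<in> carrier H"
    then show "l (h \<otimes>\<^bsub>H\<^esub> h') = l h ** l h'" by (rule hom)
  next
    fix h t assume "h \<in> carrier H" "t \<in> punct_disc"
    then show "\<forall>F. is_lift p e t (act h) F \<longrightarrow> (\<forall>m z. F (z + Emb e m) - F z = Emb e (l h *v m))"
      using Pl unfolding P_def by blast
  qed
qed


end
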